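(* Let $k\ge3$, $\omega=\lceil\ln\ln n\rceil$ and let $p=p(n)=O(1/n)$. Let $(\tilde G,\hat\sigma_1,\hat\sigma_2)$ be drawn from the binomial planted replica model $\tilde\pi_{n,p}$. (1) Let $\mathcal K(G)$ be the number of vertices $v$ of a graph $G$ such that $\partial^\omega(G,v)$ contains a cycle. Then $\tilde\pi_{n,p}[\mathcal K(\tilde G)>n^{2/3}]=o(n^{-1/2})$. (2) Let $\mathcal L$ be the event that there is a vertex $v$ such that $\partial^\omega(\tilde G,v)$ contains more than $n^{0.1}$ vertices. Then $\tilde\pi_{n,p}[\mathcal L]\leq\exp(-\Omega(\ln^2n))$.
   Context: For maps $\sigma,\tau:[n]\to[k]$, a pair $\{u,v\}$ is bichromatic under both if $\sigma(u)\ne\sigma(v)$ and $\tau(u)\ne\tau(v)$. The binomial planted replica model $\tilde\pi_{n,p}$ is the distribution of $(\tilde G,\hat\sigma_1,\hat\sigma_2)$ obtained by choosing $\hat\sigma_1,\hat\sigma_2:[n]\to[k]$ independently and uniformly, and then including each pair of vertices of $[n]$ that is bichromatic under both $\hat\sigma_1$ and $\hat\sigma_2$ as an edge independently with probability $p$. $\partial^\omega(G,v)$ is the subgraph of $G$ induced on vertices at distance at most $\omega$ from $v$. *)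

theory Defs
  imports "HOL-Probability.Probability" "HOL-Library.Landau_Symbols"
begin

text \<open>Vertex set [n] is rendered as {0..<n}; a graph on [n] is a set of
  2-element subsets of {0..<n} (its edge set).\<close>

definition colourings :: "nat \<Rightarrow> nat \<Rightarrow> (nat \<Rightarrow> nat) set" where
  "colourings n k = PiE {0..<n} (\<lambda>_. {0..<k})"

definition bichrom_pairs :: "nat \<Rightarrow> (nat \<Rightarrow> nat) \<Rightarrow> (nat \<Rightarrow> nat) \<Rightarrow> nat set set" where
  "bichrom_pairs n s1 s2 =
     {{u, v} | u v. u < n \<and> v < n \<and> s1 u \<noteq> s1 v \<and> s2 u \<noteq> s2 v}"

definition planted_replica ::
  "nat \<Rightarrow> nat \<Rightarrow> real \<Rightarrow> (nat set set \<times> (nat \<Rightarrow> nat) \<times> (nat \<Rightarrow> nat)) pmf" where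
  "planted_replica n k p =
     do {
       s1 \<leftarrow> pmf_of_set (colourings n k);
       s2 \<leftarrow> pmf_of_set (colourings n k);
       f \<leftarrow> Pi_pmf (bichrom_pairs n s1 s2) False (\<lambda>_. bernoulli_pmf p);
       return_pmf ({e \<in> bichrom_pairs n s1 s2. f e}, s1, s2)
     }"

fun within_dist :: "nat set set \<Rightarrow> nat \<Rightarrow> nat \<Rightarrow> nat \<Rightarrow> bool" where
  "within_dist G 0 v u = (u = v)"
| "within_dist G (Suc m) v u = (within_dist G m v u \<or> (\<exists>w. within_dist G m v w \<and> {w, u} \<in> G))"

definition ball_set :: "nat set set \<Rightarrow> nat \<Rightarrow> nat \<Rightarrow> nat set" where
  "ball_set G m v = {u. within_dist G m v u}"

definition nbhd_edges :: "nat set set \<Rightarrow> nat \<Rightarrow> nat \<Rightarrow> nat set set" where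
  "nbhd_edges G m v = {e \<in> G. e \<subseteq> ball_set G m v}"

definition has_cycle :: "nat set set \<Rightarrow> bool" where
  "has_cycle H \<longleftrightarrow> (\<exists>xs. length xs \<ge> 3 \<and> distinct xs \<and>
      (\<forall>i < length xs. {xs ! i, xs ! ((i + 1) mod length xs)} \<in> H))"

definition cyc_count :: "nat \<Rightarrow> nat \<Rightarrow> nat set set \<Rightarrow> nat" where
  "cyc_count n m G = card {v \<in> {0..<n}. has_cycle (nbhd_edges G m v)}"

definition omega :: "nat \<Rightarrow> nat" where
  "omega n = nat \<lceil>ln (ln (real n))\<rceil>"

end

theory Submission
  imports Defs "HOL-Real_Asymp.Real_Asymp"
begin

fun walk :: "nat set set \<Rightarrow> nat list \<Rightarrow> bool" where
  "walk G [] = True"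
| "walk G [x] = True"
| "walk G (x # y # r) = ({x, y} \<in> G \<and> walk G (y # r))"

lemma walk_append:
  "xs \<noteq> [] \<Longrightarrow> ys \<noteq> [] \<Longrightarrow> walk G (xs @ ys) \<longleftrightarrow> walk G xs \<and> walk G ys \<and> {last xs, hd ys} \<in> G"
proof (induction xs rule: walk.induct)
  case (2 G x) then show ?case by (cases ys) auto
next
  case (3 G x y r) then show ?case by auto
qed auto

lemma walk_nth:
  "walk G xs \<longleftrightarrow> (\<forall>i. Suc i < length xs \<longrightarrow> {xs ! i, xs ! Suc i} \<in> G)"
proof (induction G xs rule: walk.induct)
  case (3 G x y r)
  show ?case
  proof
    assume "walk G (x # y # r)"
    then show "\<forall>i. Suc i < length (x # y # r) \<longrightarrow> {(x # y # r) ! i, (x # y # r) ! Suc i} \<in> G"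
      using 3 by (auto simp: nth_Cons split: nat.splits)
  next
    assume h: "\<forall>i. Suc i < length (x # y # r) \<longrightarrow> {(x # y # r) ! i, (x # y # r) ! Suc i} \<in> G"
    have "{x,y} \<in> G" using h[rule_format, of 0] by simp
    moreover have "\<forall>i. Suc i < length (y # r) \<longrightarrow> {(y # r) ! i, (y # r) ! Suc i} \<in> G"
      using h by (metis Suc_less_eq length_Cons nth_Cons_Suc)
    ultimately show "walk G (x # y # r)" using 3 by simp
  qed
qed auto

definition reach :: "nat set set \<Rightarrow> nat \<Rightarrow> nat \<Rightarrow> bool" where
  "reach G v u \<longleftrightarrow> (\<exists>m. within_dist G m v u)"

definition gdist :: "nat set set \<Rightarrow> nat \<Rightarrow> nat \<Rightarrow> nat" where
  "gdist G v u = (LEAST d. within_dist G d v u)"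

lemma within_mono: "within_dist G m v u \<Longrightarrow> m \<le> m' \<Longrightarrow> within_dist G m' v u"
proof (induction m' arbitrary: m)
  case 0 then show ?case by simp
next
  case (Suc m') then show ?case
    by (cases "m = Suc m'") (auto simp: le_Suc_eq)
qed

lemma within_edge: "within_dist G d v u \<Longrightarrow> {u, w} \<in> G \<Longrightarrow> within_dist G (Suc d) v w"
  by auto

lemma gdist_le: "within_dist G d v u \<Longrightarrow> gdist G v u \<le> d"
  unfolding gdist_def by (rule Least_le)

lemma gdist_within: "reach G v u \<Longrightarrow> within_dist G (gdist G v u) v u"
  unfolding gdist_def reach_def by (metis LeastI)

lemma gdist_edge: "reach G v u \<Longrightarrow> {u, w} \<in> G \<Longrightarrow> reach G v w \<and> gdist G v w \<le> Suc (gdist G v u)"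
  using gdist_within within_edge gdist_le reach_def by metis

lemma gdist_edge': "reach G v u \<Longrightarrow> {w, u} \<in> G \<Longrightarrow> reach G v w \<and> gdist G v w \<le> Suc (gdist G v u)"
  using gdist_edge by (metis insert_commute)

lemma gdist_0: "reach G v u \<Longrightarrow> gdist G v u = 0 \<Longrightarrow> u = v"
  using gdist_within by fastforce

lemma gdist_Suc:
  assumes "reach G v u" "gdist G v u = Suc j"
  shows "\<exists>w. {w, u} \<in> G \<and> reach G v w \<and> gdist G v w = j"
proof -
  have "within_dist G (Suc j) v u" using gdist_within assms by metis
  moreover have "\<not> within_dist G j v u" using gdist_le assms by fastforce
  ultimately obtain w where w: "within_dist G j v w" "{w, u} \<in> G" by auto
  have rw: "reach G v w" using w reach_def by blast
  have "gdist G v w \<le> j" using gdist_le w by blast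
  moreover have "gdist G v u \<le> Suc (gdist G v w)" using gdist_edge rw w(2) by blast
  ultimately have "gdist G v w = j" using assms by simp
  then show ?thesis using w rw by blast
qed

lemma short_path:
  "reach G v u \<Longrightarrow> gdist G v u = j \<Longrightarrow> \<exists>P. length P = Suc j \<and> hd P = v \<and> last P = u \<and> walk G P
     \<and> distinct P \<and> (\<forall>y\<in>set P. gdist G v y \<le> j)"
proof (induction j arbitrary: u)
  case 0
  then have "u = v" using gdist_0 by blast
  then show ?case using \<open>gdist G v u = 0\<close> by (intro exI[of _ "[v]"]) auto
next
  case (Suc j)
  obtain w where w: "{w, u} \<in> G" "reach G v w" "gdist G v w = j" using gdist_Suc Suc.prems by blast
  obtain P where P: "length P = Suc j" "hd P = v" "last P = w" "walk G P" "distinct P"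
      "\<forall>y\<in>set P. gdist G v y \<le> j" using Suc.IH w by blast
  have "u \<notin> set P" using P(6) Suc.prems by fastforce
  moreover have "P \<noteq> []" using P(1) by auto
  ultimately show ?case using P w Suc.prems
    by (intro exI[of _ "P @ [u]"]) (auto simp: walk_append)
qed

definition lolli :: "nat set set \<Rightarrow> nat \<Rightarrow> nat list \<Rightarrow> nat \<Rightarrow> bool" where
  "lolli G v ys s \<longleftrightarrow> distinct ys \<and> ys \<noteq> [] \<and> hd ys = v \<and> walk G ys \<and> s + 3 \<le> length ys
     \<and> {last ys, ys ! s} \<in> G"

lemma hd_last_distinct: "distinct W \<Longrightarrow> 2 \<le> length W \<Longrightarrow> hd W \<noteq> last W"
  by (cases W) (auto simp: last_conv_nth nth_eq_iff_index_eq)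

lemma merge_lemma:
  "distinct W \<Longrightarrow> 2 \<le> length W \<Longrightarrow> walk G W \<Longrightarrow> reach G v (hd W) \<Longrightarrow> reach G v (last W)
   \<Longrightarrow> gdist G v (hd W) = j \<Longrightarrow> gdist G v (last W) = j \<Longrightarrow> (\<forall>y\<in>set W. j \<le> gdist G v y)
   \<Longrightarrow> \<exists>ys s. lolli G v ys s \<and> length ys \<le> 2 * j + length W"
proof (induction j arbitrary: W)
  case 0
  then have "hd W = v" "last W = v" using gdist_0 by blast+
  then show ?case using hd_last_distinct 0 by metis
next
  case (Suc j)
  define a where "a = hd W"
  define b where "b = last W"
  have Wne: "W \<noteq> []" using Suc.prems by auto
  obtain a' where a': "{a', a} \<in> G" "reach G v a'" "gdist G v a' = j"
    using gdist_Suc Suc.prems a_def by blast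
  obtain b' where b': "{b', b} \<in> G" "reach G v b'" "gdist G v b' = j"
    using gdist_Suc Suc.prems b_def by blast
  show ?case
  proof (cases "a' = b'")
    case True
    obtain P where P: "length P = Suc j" "hd P = v" "last P = a'" "walk G P" "distinct P"
      "\<forall>y\<in>set P. gdist G v y \<le> j" using short_path a' by blast
    have Pne: "P \<noteq> []" using P(1) by auto
    have disj: "set P \<inter> set W = {}" using P(6) Suc.prems(8) by fastforce
    have Pj: "(P @ W) ! j = a'"
      using P(1,3) Pne by (simp add: nth_append last_conv_nth)
    have lw: "last (P @ W) = b" using Wne b_def by simp
    have "lolli G v (P @ W) j"
      unfolding lolli_def using P Pne Wne disj Suc.prems(1,2,3) a' b' True Pj lw
      by (auto simp: walk_append a_def insert_commute)
    then show ?thesis using P(1) by (intro exI[of _ "P @ W"] exI[of _ j]) auto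
  next
    case False
    define W' where "W' = a' # W @ [b']"
    have "a' \<notin> set W" "b' \<notin> set W" using a'(3) b'(3) Suc.prems(8) by fastforce+
    then have dW': "distinct W'" using False Suc.prems(1) W'_def by auto
    have "walk G (W @ [b'])" using Wne Suc.prems(3) b' by (simp add: walk_append b_def insert_commute)
    then have wW': "walk G W'"
      using W'_def Wne a' by (cases W) (auto simp: a_def insert_commute)
    have "\<exists>ys s. lolli G v ys s \<and> length ys \<le> 2 * j + length W'"
      by (rule Suc.IH) (use dW' wW' W'_def a' b' Suc.prems(8) in auto)
    then show ?thesis using W'_def by auto
  qed
qed

lemma mod_succ_idx: "i < (L::nat) \<Longrightarrow> (i + 1) mod L = (if i = L - 1 then 0 else i + 1)"
  by (auto simp: mod_if)

lemma mod_pred_idx: assumes "i < (L::nat)" shows "(i + L - 1) mod L = (if i = 0 then L - 1 else i - 1)"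
proof (cases "i = 0")
  case False
  then have "i + L - 1 = (i - 1) + L" by simp
  then show ?thesis using False \<open>i < L\<close> by (simp add: mod_if)
qed (use assms in auto)

lemma cycle_lolli:
  assumes "has_cycle (nbhd_edges G m v)"
  shows "\<exists>ys s. lolli G v ys s \<and> length ys \<le> 2 * m + 2"
proof -
  obtain xs where xs: "length xs \<ge> 3" "distinct xs"
    "\<forall>i < length xs. {xs ! i, xs ! ((i + 1) mod length xs)} \<in> nbhd_edges G m v"
    using assms unfolding has_cycle_def by blast
  define L where "L = length xs"
  have E: "{xs ! i, xs ! ((i + 1) mod L)} \<in> G" if "i < L" for i
    using xs(3) that unfolding L_def nbhd_edges_def by blast
  have W: "within_dist G m v (xs ! i)" if "i < L" for i
    using xs(3) that unfolding L_def nbhd_edges_def ball_set_def by blast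
  have R: "reach G v (xs ! i)" if "i < L" for i using W[OF that] reach_def by blast
  have D: "gdist G v (xs ! i) \<le> m" if "i < L" for i using W[OF that] gdist_le by blast
  define M where "M = Max ((\<lambda>i. gdist G v (xs ! i)) ` {..<L})"
  have "L > 0" using xs(1) unfolding L_def by linarith
  then have "M \<in> (\<lambda>i. gdist G v (xs ! i)) ` {..<L}" unfolding M_def by (intro Max_in) auto
  then obtain i0 where i0: "i0 < L" "gdist G v (xs ! i0) = M" by auto
  have mx: "gdist G v (xs ! i) \<le> gdist G v (xs ! i0)" if "i < L" for i
    using that i0(2) unfolding M_def by (metis Max_ge finite_imageI finite_lessThan imageI lessThan_iff)
  define i1 where "i1 = (i0 + 1) mod L"
  define i2 where "i2 = (i0 + L - 1) mod L"
  have i1L: "i1 < L" "i2 < L" using \<open>L > 0\<close> i1_def i2_def by auto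
  have i2s: "(i2 + 1) mod L = i0"
    unfolding i2_def mod_pred_idx[OF i0(1)] using i0(1) \<open>L > 0\<close> by (auto simp: mod_if)
  have ne: "i1 \<noteq> i0" "i2 \<noteq> i0" "i1 \<noteq> i2"
    unfolding i1_def i2_def mod_succ_idx[OF i0(1)] mod_pred_idx[OF i0(1)]
    using i0(1) xs(1) unfolding L_def[symmetric] by (auto split: if_splits)
  define x where "x = xs ! i0"
  define a where "a = xs ! i1"
  define b where "b = xs ! i2"
  have dst: "x \<noteq> a" "x \<noteq> b" "a \<noteq> b"
    using ne i0(1) i1L xs(2) unfolding x_def a_def b_def L_def
    by (auto simp: nth_eq_iff_index_eq)
  have exa: "{x, a} \<in> G" using E[OF i0(1)] unfolding x_def a_def i1_def .
  have ebx: "{b, x} \<in> G" using E[OF i1L(2)] unfolding x_def b_def i2s .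
  have Ra: "reach G v a" "reach G v b" "reach G v x" using R i1L i0(1) a_def b_def x_def by auto
  have le1: "gdist G v a \<le> gdist G v x" "gdist G v b \<le> gdist G v x"
    using mx i1L unfolding a_def b_def x_def by auto
  have le2: "gdist G v x \<le> Suc (gdist G v a)" "gdist G v x \<le> Suc (gdist G v b)"
    using gdist_edge'[OF Ra(1) exa] gdist_edge[OF Ra(2) ebx] by auto
  have xm: "gdist G v x \<le> m" using D i0(1) x_def by auto
  show ?thesis
  proof (cases "gdist G v a = gdist G v x")
    case True
    have "\<exists>ys s. lolli G v ys s \<and> length ys \<le> 2 * gdist G v x + length [x, a]"
      by (rule merge_lemma) (use True dst exa Ra in auto)
    then show ?thesis using xm by fastforce
  next
    case F1: False
    show ?thesis
    proof (cases "gdist G v b = gdist G v x")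
      case True
      have "\<exists>ys s. lolli G v ys s \<and> length ys \<le> 2 * gdist G v x + length [b, x]"
        by (rule merge_lemma) (use True dst ebx Ra in auto)
      then show ?thesis using xm by fastforce
    next
      case False
      define j where "j = gdist G v a"
      have jj: "gdist G v b = j" "gdist G v x = Suc j" using F1 False le1 le2 j_def by auto
      have "\<exists>ys s. lolli G v ys s \<and> length ys \<le> 2 * j + length [a, x, b]"
        by (rule merge_lemma) (use jj j_def dst exa ebx Ra in \<open>auto simp: insert_commute\<close>)
      then show ?thesis using xm jj by fastforce
    qed
  qed
qed

lemma within_sub: "(\<forall>e\<in>G. e \<subseteq> A) \<Longrightarrow> within_dist G m v u \<Longrightarrow> u = v \<or> u \<in> A"
proof (induction m arbitrary: u)
  case (Suc m)
  show ?case
  proof (cases "within_dist G m v u")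
    case True then show ?thesis using Suc by blast
  next
    case False
    then obtain w where "{w, u} \<in> G" using Suc.prems(2) by auto
    then have "{w, u} \<subseteq> A" using Suc.prems(1) by blast
    then show ?thesis by simp
  qed
qed simp

lemma ball_card:
  assumes "finite A" "\<forall>e\<in>G. e \<subseteq> A" "\<forall>u. card {w\<in>A. {u, w} \<in> G} \<le> D"
  shows "card (ball_set G m v) \<le> (D + 1) ^ m"
proof (induction m)
  case 0
  have "ball_set G 0 v = {v}" unfolding ball_set_def by auto
  then show ?case by simp
next
  case (Suc m)
  have fin: "finite (ball_set G m v)"
  proof (rule finite_subset[of _ "insert v A"])
    show "ball_set G m v \<subseteq> insert v A" using within_sub[OF assms(2)] unfolding ball_set_def by blast
  qed (use assms(1) in simp)
  have sub: "ball_set G (Suc m) v \<subseteq> ball_set G m v \<union> (\<Union>u\<in>ball_set G m v. {w\<in>A. {u, w} \<in> G})"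
  proof
    fix u assume "u \<in> ball_set G (Suc m) v"
    then have "within_dist G m v u \<or> (\<exists>w. within_dist G m v w \<and> {w, u} \<in> G)" unfolding ball_set_def by simp
    then show "u \<in> ball_set G m v \<union> (\<Union>u\<in>ball_set G m v. {w\<in>A. {u, w} \<in> G})"
    proof
      assume "\<exists>w. within_dist G m v w \<and> {w, u} \<in> G"
      then obtain w where w: "within_dist G m v w" "{w, u} \<in> G" by blast
      then have "u \<in> A" using assms(2) by blast
      then show ?thesis using w unfolding ball_set_def by blast
    qed (simp add: ball_set_def)
  qed
  have "card (ball_set G (Suc m) v) \<le> card (ball_set G m v \<union> (\<Union>u\<in>ball_set G m v. {w\<in>A. {u, w} \<in> G}))"
  proof (rule card_mono[OF _ sub])
    have "finite (\<Union>u\<in>ball_set G m v. {w\<in>A. {u, w} \<in> G})"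
      using fin assms(1) by (intro finite_UN_I) simp_all
    then show "finite (ball_set G m v \<union> (\<Union>u\<in>ball_set G m v. {w\<in>A. {u, w} \<in> G}))" using fin by simp
  qed
  also have "\<dots> \<le> card (ball_set G m v) + card (\<Union>u\<in>ball_set G m v. {w\<in>A. {u, w} \<in> G})"
    by (rule card_Un_le)
  also have "card (\<Union>u\<in>ball_set G m v. {w\<in>A. {u, w} \<in> G}) \<le> (\<Sum>u\<in>ball_set G m v. card {w\<in>A. {u, w} \<in> G})"
    by (rule card_UN_le[OF fin])
  also have "\<dots> \<le> (\<Sum>u\<in>ball_set G m v. D)" using assms(3) by (intro sum_mono) blast
  also have "card (ball_set G m v) + (\<Sum>u\<in>ball_set G m v. D) = (D + 1) * card (ball_set G m v)" by simp
  also have "\<dots> \<le> (D + 1) * (D + 1) ^ m" using Suc.IH by (rule mult_left_mono) simp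
  finally show ?case by simp
qed

definition lolE :: "nat list \<Rightarrow> nat \<Rightarrow> nat set set" where
  "lolE ys s = (\<lambda>i. {ys ! i, ys ! Suc i}) ` {..<length ys - 1} \<union> {{last ys, ys ! s}}"

lemma walk_img: "walk G ys \<longleftrightarrow> (\<lambda>i. {ys ! i, ys ! Suc i}) ` {..<length ys - 1} \<subseteq> G"
  unfolding walk_nth image_subset_iff by (metis Suc_eq_plus1 lessThan_iff less_diff_conv)

lemma lolli_iff: "lolli G v ys s \<longleftrightarrow> (distinct ys \<and> ys \<noteq> [] \<and> hd ys = v \<and> s + 3 \<le> length ys) \<and> lolE ys s \<subseteq> G"
proof -
  have "lolE ys s \<subseteq> G \<longleftrightarrow> walk G ys \<and> {last ys, ys ! s} \<in> G"
    unfolding lolE_def walk_img Un_subset_iff by simp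
  then show ?thesis unfolding lolli_def by argo
qed

lemma card_lolE:
  assumes "distinct ys" "s + 3 \<le> length ys"
  shows "card (lolE ys s) = length ys"
proof -
  define L where "L = length ys"
  have inj: "inj_on (\<lambda>i. {ys ! i, ys ! Suc i}) {..<L - 1}"
  proof (rule inj_onI)
    fix i j assume ij: "i \<in> {..<L - 1}" "j \<in> {..<L - 1}" "{ys ! i, ys ! Suc i} = {ys ! j, ys ! Suc j}"
    then have "(ys ! i = ys ! j \<and> ys ! Suc i = ys ! Suc j) \<or> (ys ! i = ys ! Suc j \<and> ys ! Suc i = ys ! j)"
      by (simp add: doubleton_eq_iff)
    then show "i = j" using ij(1,2) assms(1) unfolding L_def by (auto simp: nth_eq_iff_index_eq)
  qed
  have lastn: "last ys = ys ! (L - 1)" using assms(2) unfolding L_def by (subst last_conv_nth) auto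
  have notin: "{last ys, ys ! s} \<notin> (\<lambda>i. {ys ! i, ys ! Suc i}) ` {..<L - 1}"
  proof
    assume "{last ys, ys ! s} \<in> (\<lambda>i. {ys ! i, ys ! Suc i}) ` {..<L - 1}"
    then obtain i where i: "i < L - 1" "{ys ! (L - 1), ys ! s} = {ys ! i, ys ! Suc i}" using lastn by auto
    then have "(ys ! (L - 1) = ys ! i \<and> ys ! s = ys ! Suc i) \<or> (ys ! (L - 1) = ys ! Suc i \<and> ys ! s = ys ! i)"
      by (simp add: doubleton_eq_iff)
    then show False using i(1) assms unfolding L_def by (auto simp: nth_eq_iff_index_eq)
  qed
  have "card (lolE ys s) = card ((\<lambda>i. {ys ! i, ys ! Suc i}) ` {..<L - 1}) + 1"
    unfolding lolE_def L_def[symmetric] using notin by simp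
  also have "\<dots> = L" using card_image[OF inj] assms(2) unfolding L_def by simp
  finally show ?thesis unfolding L_def .
qed

lemma card_star: "card ((\<lambda>w. {u, w}) ` T) = card T"
  by (rule card_image) (auto simp: inj_on_def doubleton_eq_iff)

lemma support_edges:
  assumes "x \<in> set_pmf (planted_replica n k q)"
  shows "\<forall>e\<in>fst x. e \<subseteq> {0..<n}"
  using assms unfolding planted_replica_def bichrom_pairs_def by auto

lemma prob_bind_le:
  assumes "\<And>x. x \<in> set_pmf M \<Longrightarrow> measure_pmf.prob (F x) A \<le> c" "0 \<le> c"
  shows "measure_pmf.prob (bind_pmf M F) A \<le> c"
proof -
  have "ennreal (measure_pmf.prob (bind_pmf M F) A) = (\<integral>\<^sup>+x. ennreal (measure_pmf.prob (F x) A) \<partial>M)"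
    by (simp add: measure_pmf.emeasure_eq_measure[symmetric])
  also have "\<dots> \<le> (\<integral>\<^sup>+x. ennreal c \<partial>M)"
    by (intro nn_integral_mono_AE) (auto simp: AE_measure_pmf_iff assms)
  also have "\<dots> = ennreal c" by simp
  finally show ?thesis using assms(2) by simp
qed

lemma finite_bichrom: "finite (bichrom_pairs n s1 s2)"
proof -
  have "bichrom_pairs n s1 s2 \<subseteq> (\<lambda>(u, v). {u, v}) ` ({0..<n} \<times> {0..<n})"
    unfolding bichrom_pairs_def by auto
  then show ?thesis by (rule finite_subset) auto
qed

lemma prob_Pi_edges:
  assumes "0 \<le> q" "q \<le> 1" "finite S" "finite B"
  shows "measure_pmf.prob (Pi_pmf B False (\<lambda>_. bernoulli_pmf q)) {f. S \<subseteq> {e \<in> B. f e}} \<le> q ^ card S"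
proof (cases "S \<subseteq> B")
  case True
  have eq: "{f. S \<subseteq> {e \<in> B. f e}} = Pi B (\<lambda>e. if e \<in> S then {True} else UNIV)"
    using True unfolding Pi_def by auto
  have "measure_pmf.prob (Pi_pmf B False (\<lambda>_. bernoulli_pmf q)) {f. S \<subseteq> {e \<in> B. f e}}
      = (\<Prod>e\<in>B. measure_pmf.prob (bernoulli_pmf q) (if e \<in> S then {True} else UNIV))"
    unfolding eq by (rule measure_Pi_pmf_Pi[OF assms(4)])
  also have "\<dots> = (\<Prod>e\<in>B. if e \<in> S then q else 1)"
    using assms(1,2) by (intro prod.cong) (auto simp: measure_pmf_single)
  also have "\<dots> = q ^ card (B \<inter> S)"
    using assms(4) by (simp add: prod.If_cases)
  also have "B \<inter> S = S" using True by blast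
  finally show ?thesis by simp
next
  case False
  then have "{f. S \<subseteq> {e \<in> B. f e}} = {}" by auto
  then show ?thesis using assms by simp
qed

lemma prob_edges:
  assumes "0 \<le> q" "q \<le> 1" "finite S"
  shows "measure_pmf.prob (planted_replica n k q) {x. S \<subseteq> fst x} \<le> q ^ card S"
proof -
  have inner: "measure_pmf.prob (Pi_pmf (bichrom_pairs n s1 s2) False (\<lambda>_. bernoulli_pmf q) \<bind>
           (\<lambda>f. return_pmf ({e \<in> bichrom_pairs n s1 s2. f e}, s1, s2))) {x. S \<subseteq> fst x} \<le> q ^ card S"
    for s1 s2
  proof -
    let ?B = "bichrom_pairs n s1 s2"
    have "measure_pmf.prob (Pi_pmf ?B False (\<lambda>_. bernoulli_pmf q) \<bind>
             (\<lambda>f. return_pmf ({e \<in> ?B. f e}, s1, s2))) {x. S \<subseteq> fst x}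
          = measure_pmf.prob (map_pmf (\<lambda>f. ({e \<in> ?B. f e}, s1, s2)) (Pi_pmf ?B False (\<lambda>_. bernoulli_pmf q))) {x. S \<subseteq> fst x}"
      by (simp add: map_pmf_def)
    also have "\<dots> = measure_pmf.prob (Pi_pmf ?B False (\<lambda>_. bernoulli_pmf q)) {f. S \<subseteq> {e \<in> ?B. f e}}"
      by (simp add: vimage_def)
    also have "\<dots> \<le> q ^ card S" by (rule prob_Pi_edges[OF assms finite_bichrom])
    finally show ?thesis .
  qed
  have nn: "0 \<le> q ^ card S" using assms(1) by simp
  show ?thesis unfolding planted_replica_def
    by (intro prob_bind_le inner nn)
qed

lemma prob_mono_support:
  assumes "\<And>x. x \<in> set_pmf M \<Longrightarrow> x \<in> E \<Longrightarrow> x \<in> F"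
  shows "measure_pmf.prob M E \<le> measure_pmf.prob M F"
proof -
  have "measure_pmf.prob M E = measure_pmf.prob M (E \<inter> set_pmf M)" by (simp add: measure_Int_set_pmf)
  also have "\<dots> \<le> measure_pmf.prob M F" using assms by (intro measure_pmf.finite_measure_mono) auto
  finally show ?thesis .
qed

lemma union_bound2:
  fixes M :: "'a pmf"
  assumes "finite I" "\<And>i. i \<in> I \<Longrightarrow> finite (J i)"
  shows "measure_pmf.prob M (\<Union>i\<in>I. \<Union>j\<in>J i. A i j) \<le> (\<Sum>i\<in>I. \<Sum>j\<in>J i. measure_pmf.prob M (A i j))"
proof -
  have "measure_pmf.prob M (\<Union>i\<in>I. \<Union>j\<in>J i. A i j) \<le> (\<Sum>i\<in>I. measure_pmf.prob M (\<Union>j\<in>J i. A i j))"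
    by (rule measure_pmf.finite_measure_subadditive_finite) (use assms in auto)
  also have "\<dots> \<le> (\<Sum>i\<in>I. \<Sum>j\<in>J i. measure_pmf.prob M (A i j))"
    by (intro sum_mono measure_pmf.finite_measure_subadditive_finite assms) auto
  finally show ?thesis .
qed

lemma part2_prob:
  assumes q: "0 \<le> q" "q \<le> 1" and t: "1 \<le> t" and tm: "real t ^ m \<le> N"
  shows "measure_pmf.prob (planted_replica n k q)
           {x. \<exists>v \<in> {0..<n}. real (card (ball_set (fst x) m v)) > N}
         \<le> real n * real (n choose t) * q ^ t"
proof -
  define Ts where "Ts = {T. T \<subseteq> {0..<n} \<and> card T = t}"
  define F where "F u T = {x :: nat set set \<times> (nat \<Rightarrow> nat) \<times> (nat \<Rightarrow> nat). (\<lambda>w. {u, w}) ` T \<subseteq> fst x}" for u :: nat and T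
  have finTs: "finite Ts" unfolding Ts_def by (rule finite_subset[of _ "Pow {0..<n}"]) auto
  have "measure_pmf.prob (planted_replica n k q)
           {x. \<exists>v \<in> {0..<n}. real (card (ball_set (fst x) m v)) > N}
        \<le> measure_pmf.prob (planted_replica n k q) (\<Union>u\<in>{0..<n}. \<Union>T\<in>Ts. F u T)"
  proof (rule prob_mono_support)
    fix x assume sx: "x \<in> set_pmf (planted_replica n k q)"
      and ex: "x \<in> {x. \<exists>v \<in> {0..<n}. real (card (ball_set (fst x) m v)) > N}"
    define G where "G = fst x"
    have sub: "\<forall>e\<in>G. e \<subseteq> {0..<n}" using support_edges[OF sx] G_def by simp
    obtain v where v: "real (card (ball_set G m v)) > N" using ex G_def by auto
    have "\<not> (\<forall>u. card {w\<in>{0..<n}. {u, w} \<in> G} \<le> t - 1)"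
    proof
      assume "\<forall>u. card {w\<in>{0..<n}. {u, w} \<in> G} \<le> t - 1"
      then have "card (ball_set G m v) \<le> (t - 1 + 1) ^ m" by (intro ball_card[OF _ sub]) auto
      then have "card (ball_set G m v) \<le> t ^ m" using t by simp
      then have "real (card (ball_set G m v)) \<le> real t ^ m" by (metis of_nat_le_iff of_nat_power)
      then show False using v tm by linarith
    qed
    then obtain u where "\<not> card {w\<in>{0..<n}. {u, w} \<in> G} \<le> t - 1" by blast
    then have u: "t \<le> card {w\<in>{0..<n}. {u, w} \<in> G}" using t by linarith
    obtain T where T: "T \<subseteq> {w\<in>{0..<n}. {u, w} \<in> G}" "card T = t"
      using obtain_subset_with_card_n[OF u] by metis
    have "T \<noteq> {}" using T(2) t by auto
    then obtain w where "w \<in> T" by blast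
    then have "{u, w} \<in> G" using T by blast
    then have "u \<in> {0..<n}" using sub by blast
    moreover have "T \<in> Ts" using T unfolding Ts_def by auto
    moreover have "x \<in> F u T" using T unfolding F_def G_def by auto
    ultimately show "x \<in> (\<Union>u\<in>{0..<n}. \<Union>T\<in>Ts. F u T)" by blast
  qed
  also have "\<dots> \<le> (\<Sum>u\<in>{0..<n}. \<Sum>T\<in>Ts. measure_pmf.prob (planted_replica n k q) (F u T))"
    by (rule union_bound2) (use finTs in auto)
  also have "\<dots> \<le> (\<Sum>u\<in>{0..<n}. \<Sum>T\<in>Ts. q ^ t)"
  proof (intro sum_mono)
    fix u T assume "T \<in> Ts"
    then have fT: "finite T" "card T = t" unfolding Ts_def by (auto intro: finite_subset)
    have "measure_pmf.prob (planted_replica n k q) (F u T) \<le> q ^ card ((\<lambda>w. {u, w}) ` T)"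
      unfolding F_def by (rule prob_edges[OF q]) (use fT in simp)
    then show "measure_pmf.prob (planted_replica n k q) (F u T) \<le> q ^ t" using fT card_star by metis
  qed
  also have "\<dots> = real n * real (card Ts) * q ^ t" by simp
  also have "card Ts = n choose t" unfolding Ts_def using n_subsets[of "{0..<n}" t] by simp
  finally show ?thesis .
qed

lemma set_sub_lolE:
  assumes "2 \<le> length ys"
  shows "set ys \<subseteq> \<Union> (lolE ys s)"
proof
  fix y assume "y \<in> set ys"
  then obtain i where i: "i < length ys" "y = ys ! i" by (auto simp: in_set_conv_nth)
  show "y \<in> \<Union> (lolE ys s)"
  proof (cases "i < length ys - 1")
    case True
    then have "i \<in> {..<length ys - 1}" by simp
    then have e: "{ys ! i, ys ! Suc i} \<in> lolE ys s" unfolding lolE_def by (intro UnI1 imageI)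
    have "y \<in> {ys ! i, ys ! Suc i}" using i(2) by simp
    then show ?thesis using e by (rule UnionI[rotated])
  next
    case False
    then have j: "i - 1 \<in> {..<length ys - 1}" "Suc (i - 1) = i" using i(1) assms by auto
    have e: "{ys ! (i - 1), ys ! Suc (i - 1)} \<in> lolE ys s" unfolding lolE_def using j(1) by (intro UnI1 imageI)
    have "y \<in> {ys ! (i - 1), ys ! Suc (i - 1)}" using i(2) j(2) by simp
    then show ?thesis using e by (rule UnionI[rotated])
  qed
qed

lemma cyc_v_prob:
  assumes q: "0 \<le> q" "q \<le> 1"
  shows "measure_pmf.prob (planted_replica n k q) {x. has_cycle (nbhd_edges (fst x) m v)}
         \<le> (\<Sum>l\<in>{3..2*m+2}. real l * real n ^ (l - 1) * q ^ l)"
proof -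
  define Zd where "Zd l = {zs. set zs \<subseteq> {0..<n} \<and> length zs = l - 1 \<and> distinct (v # zs)}" for l :: nat
  define J where "J l = {s. s + 3 \<le> l} \<times> Zd l" for l :: nat
  define A where "A p = {x :: nat set set \<times> (nat \<Rightarrow> nat) \<times> (nat \<Rightarrow> nat). lolE (v # snd p) (fst p) \<subseteq> fst x}" for p :: "nat \<times> nat list"
  have finZ: "finite (Zd l)" for l
    unfolding Zd_def by (rule finite_subset[OF _ finite_lists_length_eq[of "{0..<n}" "l - 1"]]) auto
  have cardZ: "card (Zd l) \<le> n ^ (l - 1)" for l
  proof -
    have "card (Zd l) \<le> card {zs. set zs \<subseteq> {0..<n} \<and> length zs = l - 1}"
      unfolding Zd_def by (rule card_mono[OF finite_lists_length_eq]) auto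
    then show ?thesis by (simp add: card_lists_length_eq)
  qed
  have finS: "finite {s. s + 3 \<le> l}" for l :: nat by (rule finite_subset[of _ "{..l}"]) auto
  have cardS: "card {s. s + 3 \<le> l} \<le> l" for l :: nat
  proof -
    have "{s. s + 3 \<le> l} \<subseteq> {..<l}" by auto
    then have "card {s. s + 3 \<le> l} \<le> card {..<l}" by (rule card_mono[rotated]) simp
    then show ?thesis by simp
  qed
  have finJ: "finite (J l)" for l unfolding J_def using finS finZ by blast
  have "measure_pmf.prob (planted_replica n k q) {x. has_cycle (nbhd_edges (fst x) m v)}
        \<le> measure_pmf.prob (planted_replica n k q) (\<Union>l\<in>{3..2*m+2}. \<Union>p\<in>J l. A p)"
  proof (rule prob_mono_support)
    fix x assume sx: "x \<in> set_pmf (planted_replica n k q)"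
      and cx: "x \<in> {x. has_cycle (nbhd_edges (fst x) m v)}"
    have sub: "\<forall>e\<in>fst x. e \<subseteq> {0..<n}" using support_edges[OF sx] by simp
    obtain ys s where ys: "lolli (fst x) v ys s" "length ys \<le> 2 * m + 2"
      using cycle_lolli cx by blast
    have LL: "(distinct ys \<and> ys \<noteq> [] \<and> hd ys = v \<and> s + 3 \<le> length ys) \<and> lolE ys s \<subseteq> fst x"
      using ys(1) unfolding lolli_iff .
    have L: "distinct ys" "ys \<noteq> []" "hd ys = v" "s + 3 \<le> length ys" "lolE ys s \<subseteq> fst x"
      using LL by simp_all
    define zs where "zs = tl ys"
    have ysz: "ys = v # zs" using L(2,3) zs_def by (cases ys) auto
    have U: "\<Union> (lolE ys s) \<subseteq> {0..<n}" using L(5) sub by blast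
    have "2 \<le> length ys" using L(4) by simp
    then have sy: "set ys \<subseteq> {0..<n}" using set_sub_lolE[of ys s] U by (rule_tac subset_trans) auto
    have "set zs \<subseteq> {0..<n}" using sy ysz by simp
    moreover have "length zs = length ys - 1" using ysz by simp
    moreover have "distinct (v # zs)" using L(1) ysz by simp
    ultimately have "zs \<in> Zd (length ys)" unfolding Zd_def by blast
    then have "(s, zs) \<in> J (length ys)" using L(4) unfolding J_def by blast
    moreover have "x \<in> A (s, zs)" using L(5) ysz unfolding A_def by simp
    moreover have "length ys \<in> {3..2*m+2}" using L(4) ys(2) by auto
    ultimately show "x \<in> (\<Union>l\<in>{3..2*m+2}. \<Union>p\<in>J l. A p)" by blast
  qed
  also have "\<dots> \<le> (\<Sum>l\<in>{3..2*m+2}. \<Sum>p\<in>J l. measure_pmf.prob (planted_replica n k q) (A p))"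
    by (rule union_bound2) (use finJ in auto)
  also have "\<dots> \<le> (\<Sum>l\<in>{3..2*m+2}. \<Sum>p\<in>J l. q ^ l)"
  proof (intro sum_mono)
    fix l p assume p: "p \<in> J l"
    obtain s zs where p': "p = (s, zs)" by (cases p)
    have d: "distinct (v # zs)" "s + 3 \<le> length (v # zs)" "length (v # zs) = l"
      using p p' unfolding J_def Zd_def by auto
    have fin: "finite (lolE (v # zs) s)" unfolding lolE_def by simp
    have "measure_pmf.prob (planted_replica n k q) (A p) \<le> q ^ card (lolE (v # zs) s)"
      unfolding A_def p' by (simp add: prob_edges[OF q fin])
    also have "card (lolE (v # zs) s) = l" using card_lolE[OF d(1,2)] d(3) by simp
    finally show "measure_pmf.prob (planted_replica n k q) (A p) \<le> q ^ l" .
  qed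
  also have "\<dots> \<le> (\<Sum>l\<in>{3..2*m+2}. real l * real n ^ (l - 1) * q ^ l)"
  proof (intro sum_mono)
    fix l
    have "card (J l) \<le> l * n ^ (l - 1)"
      unfolding J_def card_cartesian_product using cardS[of l] cardZ[of l] by (intro mult_le_mono) auto
    then have "real (card (J l)) \<le> real l * real n ^ (l - 1)" by (metis of_nat_le_iff of_nat_mult of_nat_power)
    then show "(\<Sum>p\<in>J l. q ^ l) \<le> real l * real n ^ (l - 1) * q ^ l"
      using q by (simp add: mult_right_mono)
  qed
  finally show ?thesis .
qed

lemma cyc_count_prob:
  assumes q: "0 \<le> q" "q \<le> 1" and N: "0 < N"
  shows "measure_pmf.prob (planted_replica n k q) {x. real (cyc_count n m (fst x)) > N}
         \<le> real n * (\<Sum>l\<in>{3..2*m+2}. real l * real n ^ (l - 1) * q ^ l) / N"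
proof -
  let ?M = "planted_replica n k q"
  define C where "C v = {x :: nat set set \<times> (nat \<Rightarrow> nat) \<times> (nat \<Rightarrow> nat). has_cycle (nbhd_edges (fst x) m v)}" for v
  define u where "u x = (\<Sum>v\<in>{0..<n}. indicator (C v) x :: real)" for x
  have ueq: "real (cyc_count n m (fst x)) = u x" for x
  proof -
    have "{v \<in> {0..<n}. has_cycle (nbhd_edges (fst x) m v)} = {0..<n} \<inter> {v. x \<in> C v}"
      unfolding C_def by auto
    then have "real (cyc_count n m (fst x)) = real (card ({0..<n} \<inter> {v. x \<in> C v}))"
      unfolding cyc_count_def by simp
    also have "\<dots> = (\<Sum>v\<in>{0..<n}. indicator {v. x \<in> C v} v)"
      by (simp add: indicator_def sum.If_cases)
    also have "\<dots> = u x" unfolding u_def by (intro sum.cong) (auto simp: indicator_def)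
    finally show ?thesis .
  qed
  have intI: "integrable (measure_pmf ?M) (indicator B :: _ \<Rightarrow> real)" for B
    by (rule measure_pmf.integrable_const_bound[where B=1]) (auto simp: indicator_def)
  have int: "integrable (measure_pmf ?M) u" unfolding u_def by (rule Bochner_Integration.integrable_sum) (rule intI)
  have "measure_pmf.prob ?M {x. real (cyc_count n m (fst x)) > N}
        \<le> measure_pmf.prob ?M {x \<in> space (measure_pmf ?M). u x \<ge> N}"
  proof (rule measure_pmf.finite_measure_mono)
    show "{x. real (cyc_count n m (fst x)) > N} \<subseteq> {x \<in> space (measure_pmf ?M). u x \<ge> N}"
      using ueq by (metis (mono_tags, lifting) UNIV_I less_eq_real_def mem_Collect_eq space_measure_pmf subsetI)
  qed simp
  also have "\<dots> \<le> (\<integral>x. u x \<partial>measure_pmf ?M) / N"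
  proof (rule integral_Markov_inequality_measure[OF int, of UNIV])
    show "AE x in measure_pmf ?M. 0 \<le> u x" unfolding u_def by (simp add: sum_nonneg)
  qed (use N in simp_all)
  also have "(\<integral>x. u x \<partial>measure_pmf ?M) = (\<Sum>v\<in>{0..<n}. measure_pmf.prob ?M (C v))"
    unfolding u_def by (subst Bochner_Integration.integral_sum) (simp_all add: intI)
  also have "\<dots> \<le> (\<Sum>v\<in>{0..<n}. (\<Sum>l\<in>{3..2*m+2}. real l * real n ^ (l - 1) * q ^ l))"
    unfolding C_def by (intro sum_mono cyc_v_prob q)
  also have "\<dots> = real n * (\<Sum>l\<in>{3..2*m+2}. real l * real n ^ (l - 1) * q ^ l)" by simp
  finally show ?thesis using N by (meson divide_right_mono less_imp_le order_trans)
qed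

lemma pow_div_fact_le_exp: "(real t) ^ t / fact t \<le> exp (real t)"
proof -
  have s: "(\<lambda>n. real t ^ n /\<^sub>R fact n) sums exp (real t)" by (rule exp_converges)
  have "(\<Sum>n\<in>{t}. real t ^ n /\<^sub>R fact n) \<le> (\<Sum>n. real t ^ n /\<^sub>R fact n)"
    by (rule sum_le_suminf) (use s in \<open>auto simp: sums_iff\<close>)
  then show ?thesis using s by (simp add: sums_iff divide_inverse mult.commute)
qed

lemma tail_bound:
  fixes C q :: real and n t :: nat
  assumes C: "1 \<le> C" and t1: "C * exp 2 \<le> real t" and t2: "ln (real n) + (ln (real n))\<^sup>2 \<le> real t"
    and n: "1 \<le> n" and q: "0 \<le> q" "real n * q \<le> C"
  shows "real n * real (n choose t) * q ^ t \<le> exp (- (ln (real n))\<^sup>2)"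
proof -
  have tpos: "real t > 0" using t1 C by (smt (verit) exp_gt_zero mult_pos_pos)
  have "real (n choose t) * fact t \<le> real n ^ t"
    using binomial_fact_pow[of n t] by (metis of_nat_fact of_nat_le_iff of_nat_mult of_nat_power)
  then have b: "real (n choose t) \<le> real n ^ t / fact t" by (simp add: field_simps)
  have "real (n choose t) * q ^ t \<le> real n ^ t / fact t * q ^ t"
    using b q by (intro mult_right_mono) auto
  also have "\<dots> = (real n * q) ^ t / fact t" by (simp add: power_mult_distrib)
  also have "\<dots> \<le> C ^ t / fact t"
    using q by (intro divide_right_mono power_mono) auto
  also have "\<dots> = (C / real t) ^ t * (real t ^ t / fact t)"
    using tpos by (simp add: power_divide)
  also have "\<dots> \<le> (C / real t) ^ t * exp (real t)"
    using C tpos by (intro mult_left_mono pow_div_fact_le_exp) auto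
  also have "\<dots> = (C * exp 1 / real t) ^ t"
    by (simp add: power_mult_distrib power_divide exp_of_nat_mult[symmetric])
  also have "\<dots> \<le> (exp (-1)) ^ t"
  proof (intro power_mono)
    have "C * exp 1 * exp 1 \<le> real t" using t1 by (simp add: mult.assoc exp_add[symmetric])
    then have "C * exp 1 \<le> real t * exp (-1)" by (simp add: exp_minus field_simps)
    then show "C * exp 1 / real t \<le> exp (-1)" using tpos by (simp add: field_simps)
  qed (use C tpos in auto)
  also have "\<dots> = exp (- real t)" by (simp add: exp_of_nat_mult[symmetric])
  finally have A: "real (n choose t) * q ^ t \<le> exp (- real t)" .
  have "real n * real (n choose t) * q ^ t \<le> real n * exp (- real t)"
    using A n by (simp add: mult.assoc)
  also have "\<dots> = exp (ln (real n) - real t)" using n by (simp add: exp_diff exp_minus field_simps)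
  also have "\<dots> \<le> exp (- (ln (real n))\<^sup>2)" using t2 by simp
  finally show ?thesis .
qed

lemma part1_arith:
  fixes C q :: real and n m :: nat
  assumes C: "1 \<le> C" and n: "1 \<le> n" and q: "0 \<le> q" "real n * q \<le> C"
  shows "real n * (\<Sum>l\<in>{3..2*m+2}. real l * real n ^ (l - 1) * q ^ l) \<le> (2 * real m + 2)^2 * C ^ (2*m+2)"
proof -
  have "real n * (\<Sum>l\<in>{3..2*m+2}. real l * real n ^ (l - 1) * q ^ l) = (\<Sum>l\<in>{3..2*m+2}. real l * (real n * q) ^ l)"
    unfolding sum_distrib_left
  proof (intro sum.cong refl)
    fix l assume "l \<in> {3..2*m+2}"
    then have "l = Suc (l - 1)" by auto
    then have "real n * real n ^ (l - 1) = real n ^ l" by (metis power_Suc)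
    then show "real n * (real l * real n ^ (l - 1) * q ^ l) = real l * (real n * q) ^ l"
      by (simp add: power_mult_distrib algebra_simps)
  qed
  also have "\<dots> \<le> (\<Sum>l\<in>{3..2*m+2}. (2 * real m + 2) * C ^ (2*m+2))"
  proof (intro sum_mono)
    fix l assume l: "l \<in> {3..2*m+2}"
    have "(real n * q) ^ l \<le> C ^ l" using q n by (intro power_mono) auto
    also have "\<dots> \<le> C ^ (2*m+2)" using C l by (intro power_increasing) auto
    finally have a: "(real n * q) ^ l \<le> C ^ (2*m+2)" .
    have b: "real l \<le> 2 * real m + 2" using l by auto
    show "real l * (real n * q) ^ l \<le> (2 * real m + 2) * C ^ (2*m+2)"
      using a b q n by (intro mult_mono) auto
  qed
  also have "\<dots> = real (card {3..2*m+2}) * ((2 * real m + 2) * C ^ (2*m+2))" by simp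
  also have "\<dots> \<le> (2 * real m + 2) * ((2 * real m + 2) * C ^ (2*m+2))"
    using C by (intro mult_right_mono) auto
  also have "\<dots> = (2 * real m + 2)^2 * C ^ (2*m+2)" by (simp add: power2_eq_square)
  finally show ?thesis .
qed

lemma omega_bounds:
  assumes "0 < ln (ln (real n))"
  shows "1 \<le> omega n" "real (omega n) \<le> ln (ln (real n)) + 1"
proof -
  let ?L = "ln (ln (real n))"
  have c1: "0 < \<lceil>?L\<rceil>" using assms by (simp add: zero_less_ceiling)
  have "real (omega n) = real_of_int \<lceil>?L\<rceil>" unfolding omega_def using c1 by simp
  then show "real (omega n) \<le> ?L + 1" by (simp add: of_int_ceiling_le_add_one)
  show "1 \<le> omega n" unfolding omega_def using c1 by (simp add: Suc_le_eq)
qed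

lemma part2_main:
  fixes p :: "nat \<Rightarrow> real"
  assumes p: "\<And>n. 0 \<le> p n \<and> p n \<le> 1" and C: "1 \<le> C"
    and ev: "\<forall>\<^sub>F n in at_top. real n * p n \<le> C"
  shows "\<forall>\<^sub>F n in at_top.
           measure_pmf.prob (planted_replica n k (p n))
             {x. \<exists>v \<in> {0..<n}. real (card (ball_set (fst x) (omega n) v)) > real n powr 0.1}
           \<le> exp (- 1 * (ln (real n))\<^sup>2)"
proof -
  have e2: "\<forall>\<^sub>F n in at_top. 0 < ln (ln (real n))" by real_asymp
  have lim: "filterlim (\<lambda>n::nat. real n powr (0.1/(ln (ln (real n))+1)) - 1 - ln (real n) - (ln (real n))^2) at_top at_top"
    by real_asymp
  have e3: "\<forall>\<^sub>F n in at_top. C * exp 2 + 1 \<le> real n powr (0.1/(ln (ln (real n))+1)) - 1 - ln (real n) - (ln (real n))^2"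
    using lim unfolding filterlim_at_top by blast
  have e4: "\<forall>\<^sub>F n in at_top. (1::nat) \<le> n" by (rule eventually_ge_at_top)
  show ?thesis using ev e2 e3 e4
  proof eventually_elim
    case (elim n)
    define L where "L = ln (ln (real n))"
    define w where "w = omega n"
    have w: "1 \<le> w" "real w \<le> L + 1" using omega_bounds[OF elim(2)] unfolding L_def w_def by auto
    define y where "y = real n powr (0.1 / real w)"
    define t where "t = nat \<lfloor>y\<rfloor>"
    have n1: "1 \<le> real n" using elim(4) by simp
    have y0: "0 < y" unfolding y_def using elim(4) by simp
    have ty: "real t \<le> y" "y - 1 < real t" unfolding t_def using y0
      by (simp_all add: of_nat_nat)
    have "0.1 / (L + 1) \<le> 0.1 / real w" using w elim(2) L_def by (intro divide_left_mono) auto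
    then have "real n powr (0.1 / (L + 1)) \<le> y" unfolding y_def by (rule powr_mono[OF _ n1])
    then have tg: "C * exp 2 + 1 + ln (real n) + (ln (real n))^2 \<le> real t"
      using elim(3) ty unfolding L_def by linarith
    have lnn: "0 \<le> ln (real n)" using n1 by simp
    have ce: "0 \<le> C * exp 2" using C by simp
    have sq: "0 \<le> (ln (real n))^2" by simp
    have "1 \<le> real t" using tg lnn sq ce by linarith
    then have t1: "1 \<le> t" by simp
    have "real t ^ w \<le> y ^ w" using ty by (intro power_mono) auto
    also have "y ^ w = y powr real w" using y0 by (simp add: powr_realpow)
    also have "\<dots> = real n powr 0.1" unfolding y_def powr_powr using w by simp
    finally have tw: "real t ^ w \<le> real n powr 0.1" .
    have "measure_pmf.prob (planted_replica n k (p n))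
             {x. \<exists>v \<in> {0..<n}. real (card (ball_set (fst x) w v)) > real n powr 0.1}
           \<le> real n * real (n choose t) * p n ^ t"
      by (rule part2_prob[OF _ _ t1 tw]) (use p in auto)
    also have "\<dots> \<le> exp (- (ln (real n))\<^sup>2)"
    proof (rule tail_bound[OF C])
      show "C * exp 2 \<le> real t" using tg lnn sq by linarith
      show "ln (real n) + (ln (real n))\<^sup>2 \<le> real t" using tg ce by linarith
    qed (use elim(1,4) p in auto)
    finally show ?case unfolding w_def by simp
  qed
qed

lemma part1_main:
  fixes p :: "nat \<Rightarrow> real"
  assumes p: "\<And>n. 0 \<le> p n \<and> p n \<le> 1" and C: "1 \<le> C"
    and ev: "\<forall>\<^sub>F n in at_top. real n * p n \<le> C"
  shows "(\<lambda>n. measure_pmf.prob (planted_replica n k (p n))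
            {x. real (cyc_count n (omega n) (fst x)) > real n powr (2/3)})
           \<in> o(\<lambda>n. real n powr (-1/2))"
proof -
  define g where "g n = (2 * ln (ln (real n)) + 5)^2 * real n powr (1/20 - 2/3)" for n :: nat
  have go: "g \<in> o(\<lambda>n. real n powr (-1/2))" unfolding g_def by real_asymp
  have e2: "\<forall>\<^sub>F n in at_top. 0 < ln (ln (real n))" by real_asymp
  have lim: "((\<lambda>n::nat. (2 * ln (ln (real n)) + 4) / ln (real n)) \<longlongrightarrow> 0) at_top" by real_asymp
  have "0 \<le> ln C" using C by simp
  then have cpos: "0 < 1 / (20 * (ln C + 1))" by simp
  have e5: "\<forall>\<^sub>F n in at_top. (2 * ln (ln (real n)) + 4) / ln (real n) < 1 / (20 * (ln C + 1))"
    by (rule order_tendstoD(2)[OF lim cpos])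
  have e4: "\<forall>\<^sub>F n in at_top. (1::nat) \<le> n" by (rule eventually_ge_at_top)
  have e6: "\<forall>\<^sub>F n in at_top. 0 < ln (real n)" by real_asymp
  have "\<forall>\<^sub>F n in at_top. norm (measure_pmf.prob (planted_replica n k (p n))
            {x. real (cyc_count n (omega n) (fst x)) > real n powr (2/3)}) \<le> 1 * norm (g n)"
    using ev e2 e5 e4 e6
  proof eventually_elim
    case (elim n)
    define L where "L = ln (ln (real n))"
    define w where "w = omega n"
    have w: "1 \<le> w" "real w \<le> L + 1" using omega_bounds[OF elim(2)] unfolding L_def w_def by auto
    have n1: "1 \<le> real n" using elim(4) by simp
    have L0: "0 < L" using elim(2) L_def by simp
    have lnpos: "0 < ln (real n)" using elim(5) .
    have N: "0 < real n powr (2/3)" using n1 by simp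
    have "measure_pmf.prob (planted_replica n k (p n))
            {x. real (cyc_count n w (fst x)) > real n powr (2/3)}
          \<le> real n * (\<Sum>l\<in>{3..2*w+2}. real l * real n ^ (l - 1) * p n ^ l) / real n powr (2/3)"
      by (rule cyc_count_prob[OF _ _ N]) (use p in auto)
    also have "\<dots> \<le> (2 * real w + 2)^2 * C ^ (2*w+2) / real n powr (2/3)"
      by (intro divide_right_mono part1_arith[OF C elim(4)]) (use p elim(1) N in auto)
    also have "\<dots> \<le> (2 * L + 5)^2 * real n powr (1/20) / real n powr (2/3)"
    proof (intro divide_right_mono mult_mono)
      have "2 * real w + 2 \<le> 2 * L + 5" using w by simp
      then show "(2 * real w + 2)^2 \<le> (2 * L + 5)^2" by (intro power_mono) auto
      have lnC: "0 \<le> ln C" using C by simp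
      have Cp: "C ^ (2*w+2) = exp (real (2*w+2) * ln C)"
      proof -
        have "C ^ (2*w+2) = exp (ln C) ^ (2*w+2)" using C by simp
        also have "\<dots> = exp (real (2*w+2) * ln C)" by (rule exp_of_nat_mult[symmetric])
        finally show ?thesis .
      qed
      have "real (2*w+2) * ln C \<le> (2 * L + 4) * (ln C + 1)"
        using w lnC by (intro mult_mono) auto
      also have "\<dots> \<le> ln (real n) / 20"
      proof -
        have D: "0 < 20 * (ln C + 1)" using lnC by simp
        have "2 * L + 4 < 1 / (20 * (ln C + 1)) * ln (real n)"
          using elim(3) lnpos unfolding L_def by (simp add: divide_less_eq)
        then have "2 * L + 4 < ln (real n) / (20 * (ln C + 1))" by simp
        then have "(2 * L + 4) * (20 * (ln C + 1)) < ln (real n)" using D by (simp add: less_divide_eq)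
        then show ?thesis by (simp add: algebra_simps)
      qed
      finally have "C ^ (2*w+2) \<le> exp (ln (real n) / 20)" unfolding Cp by simp
      also have "exp (ln (real n) / 20) = real n powr (1/20)" using n1 by (simp add: powr_def)
      finally show "C ^ (2*w+2) \<le> real n powr (1/20)" .
    qed (use N C in auto)
    also have "\<dots> = g n" unfolding g_def L_def powr_diff by (simp only: times_divide_eq_right)
    finally have le: "measure_pmf.prob (planted_replica n k (p n))
            {x. real (cyc_count n w (fst x)) > real n powr (2/3)} \<le> g n" .
    have "0 \<le> g n" unfolding g_def by simp
    then show ?case using le unfolding w_def by simp
  qed
  then have "(\<lambda>n. measure_pmf.prob (planted_replica n k (p n))
            {x. real (cyc_count n (omega n) (fst x)) > real n powr (2/3)}) \<in> O(g)"
    by (intro landau_o.bigI[of 1]) auto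
  then show ?thesis using go by (rule landau_o.big_small_trans)
qed

theorem lemma4p3:
  fixes k :: nat and p :: "nat \<Rightarrow> real"
  assumes "k \<ge> 3"
    and "\<And>n. 0 \<le> p n \<and> p n \<le> 1"
    and "p \<in> O(\<lambda>n. 1 / real n)"
  shows "((\<lambda>n. measure_pmf.prob (planted_replica n k (p n))
            {x. real (cyc_count n (omega n) (fst x)) > real n powr (2/3)})
           \<in> o(\<lambda>n. real n powr (-1/2))) \<and>
         (\<exists>c>0. \<forall>\<^sub>F n in at_top.
           measure_pmf.prob (planted_replica n k (p n))
             {x. \<exists>v \<in> {0..<n}. real (card (ball_set (fst x) (omega n) v)) > real n powr 0.1}
           \<le> exp (- c * (ln (real n))\<^sup>2))"
proof -
  obtain c0 where c0: "c0 > 0" "\<forall>\<^sub>F n in at_top. norm (p n) \<le> c0 * norm (1 / real n)"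
    using assms(3) by (rule landau_o.bigE)
  define C where "C = max c0 1"
  have C: "1 \<le> C" unfolding C_def by simp
  have ev: "\<forall>\<^sub>F n in at_top. real n * p n \<le> C"
    using c0(2) eventually_ge_at_top[of "1::nat"]
  proof eventually_elim
    case (elim n)
    then have "p n \<le> c0 / real n" using assms(2)[of n] by simp
    then have "real n * p n \<le> c0" using elim(2) by (simp add: field_simps)
    then show ?case unfolding C_def by simp
  qed
  have P2: "\<forall>\<^sub>F n in at_top.
           measure_pmf.prob (planted_replica n k (p n))
             {x. \<exists>v \<in> {0..<n}. real (card (ball_set (fst x) (omega n) v)) > real n powr 0.1}
           \<le> exp (- 1 * (ln (real n))\<^sup>2)" by (rule part2_main[OF assms(2) C ev])
  show ?thesis
  proof
    show "(\<lambda>n. measure_pmf.prob (planted_replica n k (p n))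
            {x. real (cyc_count n (omega n) (fst x)) > real n powr (2/3)})
           \<in> o(\<lambda>n. real n powr (-1/2))" by (rule part1_main[OF assms(2) C ev])
    show "\<exists>c>0. \<forall>\<^sub>F n in at_top.
           measure_pmf.prob (planted_replica n k (p n))
             {x. \<exists>v \<in> {0..<n}. real (card (ball_set (fst x) (omega n) v)) > real n powr 0.1}
           \<le> exp (- c * (ln (real n))\<^sup>2)"
      by (rule exI[of _ 1]) (use P2 in simp)
  qed
qed

end
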